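(* Let $G_{K,N}$ be the graph with vertex set $\{u_{ij},b_{ij}: i\in[K], j\in[N]\}$ whose edges are exactly: $u_{ij}\sim u_{ik}$ for $j\ne k$; $b_{ij}\sim u_{ik}$ for all $j,k\in[N]$; and for each $i\in[N]$ and $j\ne k$ in $[K]$: $u_{ji}\sim u_{ki}$, $b_{ji}\sim b_{ki}$, $b_{ji}\sim u_{ki}$. For $i\in[K]$ let $U_i=\{u_{ij}:j\in[N]\}$ and $B_i=\{b_{ij}:j\in[N]\}$. Then for every $i\in[K]$, the induced subgraph $G_{K,N}\big((\bigcup_{j\in[K]}B_j)\cup U_i\big)$ is perfect.
   Context: A graph is perfect if in every induced subgraph the clique number equals the chromatic number. *)

theory Defs
  imports Main
begin

datatype vtx = U nat nat | B nat nat

definition GV :: "nat \<Rightarrow> nat \<Rightarrow> vtx set" where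
  "GV K N = {U i j | i j. i \<in> {1..K} \<and> j \<in> {1..N}} \<union> {B i j | i j. i \<in> {1..K} \<and> j \<in> {1..N}}"

definition gen_edge :: "nat \<Rightarrow> nat \<Rightarrow> vtx \<Rightarrow> vtx \<Rightarrow> bool" where
  "gen_edge K N x y \<longleftrightarrow>
     (\<exists>i\<in>{1..K}. \<exists>j\<in>{1..N}. \<exists>k\<in>{1..N}. j \<noteq> k \<and> x = U i j \<and> y = U i k) \<or>
     (\<exists>i\<in>{1..K}. \<exists>j\<in>{1..N}. \<exists>k\<in>{1..N}. x = B i j \<and> y = U i k) \<or>
     (\<exists>i\<in>{1..N}. \<exists>j\<in>{1..K}. \<exists>k\<in>{1..K}. j \<noteq> k \<and>
        ((x = U j i \<and> y = U k i) \<or> (x = B j i \<and> y = B k i) \<or> (x = B j i \<and> y = U k i)))"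

definition adj :: "nat \<Rightarrow> nat \<Rightarrow> vtx \<Rightarrow> vtx \<Rightarrow> bool" where
  "adj K N x y \<longleftrightarrow> gen_edge K N x y \<or> gen_edge K N y x"

definition Uset :: "nat \<Rightarrow> nat \<Rightarrow> vtx set" where
  "Uset N i = {U i j | j. j \<in> {1..N}}"

definition Bset :: "nat \<Rightarrow> nat \<Rightarrow> vtx set" where
  "Bset N i = {B i j | j. j \<in> {1..N}}"

definition is_clique :: "('a \<Rightarrow> 'a \<Rightarrow> bool) \<Rightarrow> 'a set \<Rightarrow> 'a set \<Rightarrow> bool" where
  "is_clique E S C \<longleftrightarrow> C \<subseteq> S \<and> (\<forall>x\<in>C. \<forall>y\<in>C. x \<noteq> y \<longrightarrow> E x y)"

definition clique_number :: "('a \<Rightarrow> 'a \<Rightarrow> bool) \<Rightarrow> 'a set \<Rightarrow> nat" where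
  "clique_number E S = Max {card C | C. is_clique E S C}"

definition proper_colouring :: "('a \<Rightarrow> 'a \<Rightarrow> bool) \<Rightarrow> 'a set \<Rightarrow> nat \<Rightarrow> ('a \<Rightarrow> nat) \<Rightarrow> bool" where
  "proper_colouring E S k f \<longleftrightarrow> (\<forall>x\<in>S. f x < k) \<and> (\<forall>x\<in>S. \<forall>y\<in>S. E x y \<longrightarrow> f x \<noteq> f y)"

definition chromatic_number :: "('a \<Rightarrow> 'a \<Rightarrow> bool) \<Rightarrow> 'a set \<Rightarrow> nat" where
  "chromatic_number E S = (LEAST k. \<exists>f. proper_colouring E S k f)"

definition perfect :: "('a \<Rightarrow> 'a \<Rightarrow> bool) \<Rightarrow> 'a set \<Rightarrow> bool" where
  "perfect E V \<longleftrightarrow> (\<forall>S. S \<subseteq> V \<longrightarrow> clique_number E S = chromatic_number E S)"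

end

theory Submission
  imports Defs
begin

lemma clique_fin:
  assumes "finite S"
  shows "finite {card C | C. is_clique E S C}" "{card C | C. is_clique E S C} \<noteq> {}"
proof -
  have "{card C | C. is_clique E S C} \<subseteq> card ` Pow S" by (auto simp: is_clique_def)
  then show "finite {card C | C. is_clique E S C}" using assms finite_subset by blast
  have "is_clique E S {}" by (simp add: is_clique_def)
  then show "{card C | C. is_clique E S C} \<noteq> {}" by blast
qed

lemma clique_le:
  assumes "finite S" "is_clique E S C"
  shows "card C \<le> clique_number E S"
  unfolding clique_number_def using clique_fin[OF assms(1)] assms(2)
  by (intro Max_ge) auto

lemma clique_mono:
  assumes "finite S" "T \<subseteq> S"
  shows "clique_number E T \<le> clique_number E S"
proof -
  have fT: "finite T" using assms finite_subset by blast
  obtain C where "is_clique E T C" "card C = clique_number E T"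
    using Max_in[OF clique_fin(1)[OF fT, of E] clique_fin(2)[OF fT, of E]] unfolding clique_number_def by auto
  moreover have "is_clique E S C" using calculation assms(2) by (auto simp: is_clique_def)
  ultimately show ?thesis using clique_le[OF assms(1)] by metis
qed

lemma colour_lower:
  assumes "finite S" "proper_colouring E S k f"
  shows "clique_number E S \<le> k"
proof -
  obtain C where C: "is_clique E S C" "card C = clique_number E S"
    using Max_in[OF clique_fin(1)[OF assms(1), of E] clique_fin(2)[OF assms(1), of E]] unfolding clique_number_def by auto
  have "inj_on f C" using C(1) assms(2) unfolding inj_on_def is_clique_def proper_colouring_def
    by blast
  moreover have "f ` C \<subseteq> {..<k}" using C(1) assms(2) unfolding is_clique_def proper_colouring_def
    by auto
  ultimately have "card C \<le> k"
    by (metis card_image card_lessThan card_mono finite_lessThan)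
  then show ?thesis using C by simp
qed

lemma colour_upper:
  assumes sym: "\<And>x y. E x y \<Longrightarrow> E y x"
    and irr: "\<And>x. x \<in> S \<Longrightarrow> \<not> E x x"
    and fin: "finite S"
    and simpl: "\<And>T. T \<subseteq> S \<Longrightarrow> T \<noteq> {} \<Longrightarrow>
        \<exists>v\<in>T. \<forall>x\<in>T. \<forall>y\<in>T. x \<noteq> v \<and> y \<noteq> v \<and> x \<noteq> y \<and> E v x \<and> E v y \<longrightarrow> E x y"
    and TS: "T \<subseteq> S"
  shows "\<exists>f. proper_colouring E T (clique_number E T) f"
proof -
  have fT: "finite T" using fin TS finite_subset by blast
  show ?thesis using fT TS
  proof (induction T rule: finite_remove_induct)
    case empty
    then show ?case by (simp add: proper_colouring_def)
  next
    case (remove A)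
    obtain v where v: "v \<in> A" and vs: "\<forall>x\<in>A. \<forall>y\<in>A. x \<noteq> v \<and> y \<noteq> v \<and> x \<noteq> y \<and> E v x \<and> E v y \<longrightarrow> E x y"
      using simpl[of A] remove by blast
    obtain f where f: "proper_colouring E (A - {v}) (clique_number E (A - {v})) f"
      using remove.IH[OF v] remove.prems by blast
    define m where "m = clique_number E A"
    have le: "clique_number E (A - {v}) \<le> m" unfolding m_def
      using clique_mono[OF remove.hyps(1)] by blast
    define Nb where "Nb = {x\<in>A. x \<noteq> v \<and> E v x}"
    have "is_clique E A (insert v Nb)" unfolding is_clique_def
    proof (intro conjI ballI impI)
      show "insert v Nb \<subseteq> A" using v unfolding Nb_def by auto
    next
      fix x y assume xy: "x \<in> insert v Nb" "y \<in> insert v Nb" "x \<noteq> y"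
      show "E x y"
      proof (cases "x = v")
        case True then show ?thesis using xy unfolding Nb_def by auto
      next
        case False
        show ?thesis
        proof (cases "y = v")
          case True then show ?thesis using xy False sym unfolding Nb_def by blast
        next
          case False2: False
          then have "x \<in> Nb" "y \<in> Nb" using xy False by auto
          then show ?thesis using vs xy(3) unfolding Nb_def by blast
        qed
      qed
    qed
    then have "card (insert v Nb) \<le> m" unfolding m_def using clique_le[OF remove.hyps(1)] by blast
    moreover have "finite Nb" unfolding Nb_def using remove.hyps(1) by simp
    moreover have "v \<notin> Nb" unfolding Nb_def by simp
    ultimately have cN: "card Nb < m" by simp
    have "\<exists>c<m. c \<notin> f ` Nb"
    proof (rule ccontr)
      assume "\<not> ?thesis"
      then have "{..<m} \<subseteq> f ` Nb" by auto
      then have "m \<le> card (f ` Nb)" using \<open>finite Nb\<close>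
        by (metis card_lessThan card_mono finite_imageI)
      also have "\<dots> \<le> card Nb" using \<open>finite Nb\<close> card_image_le by blast
      finally show False using cN by simp
    qed
    then obtain c where c: "c < m" "c \<notin> f ` Nb" by blast
    define g where "g = f(v := c)"
    have "proper_colouring E A m g"
      unfolding proper_colouring_def
    proof (intro conjI ballI impI)
      fix x assume "x \<in> A"
      then show "g x < m" using f le c unfolding g_def proper_colouring_def
        by (cases "x = v") force+
    next
      fix x y assume xy: "x \<in> A" "y \<in> A" "E x y"
      show "g x \<noteq> g y"
      proof (cases "x = v")
        case True
        then have "y \<noteq> v" using irr[of v] xy remove.prems v by auto
        then have "y \<in> Nb" using True xy unfolding Nb_def by auto
        then show ?thesis using True c \<open>y \<noteq> v\<close> unfolding g_def by auto
      next
        case False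
        show ?thesis
        proof (cases "y = v")
          case True
          then have "E v x" using xy sym by simp
          then have "x \<in> Nb" using False xy unfolding Nb_def by simp
          then show ?thesis using True c False unfolding g_def by auto
        next
          case False2: False
          then show ?thesis using False xy f unfolding g_def proper_colouring_def by auto
        qed
      qed
    qed
    then show ?case unfolding m_def by blast
  qed
qed

lemma perfect_simplicial:
  assumes sym: "\<And>x y. E x y \<Longrightarrow> E y x"
    and irr: "\<And>x. x \<in> S \<Longrightarrow> \<not> E x x"
    and fin: "finite S"
    and simpl: "\<And>T. T \<subseteq> S \<Longrightarrow> T \<noteq> {} \<Longrightarrow>
        \<exists>v\<in>T. \<forall>x\<in>T. \<forall>y\<in>T. x \<noteq> v \<and> y \<noteq> v \<and> x \<noteq> y \<and> E v x \<and> E v y \<longrightarrow> E x y"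
  shows "perfect E S"
  unfolding perfect_def
proof (intro allI impI)
  fix T assume TS: "T \<subseteq> S"
  have fT: "finite T" using fin TS finite_subset by blast
  obtain f where f: "proper_colouring E T (clique_number E T) f"
    using colour_upper[OF sym irr fin simpl TS] by blast
  show "clique_number E T = chromatic_number E T"
    unfolding chromatic_number_def
    by (rule Least_equality[symmetric]) (use f colour_lower[OF fT] in auto)
qed

lemma adj_BB: "adj K N (B a c) (B b d) \<longleftrightarrow> a\<in>{1..K} \<and> b\<in>{1..K} \<and> c\<in>{1..N} \<and> c = d \<and> a \<noteq> b"
  unfolding adj_def gen_edge_def by auto

lemma adj_BU: "adj K N (B a c) (U b d) \<longleftrightarrow> a\<in>{1..K} \<and> b\<in>{1..K} \<and> c\<in>{1..N} \<and> d\<in>{1..N} \<and> (a = b \<or> c = d)"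
  unfolding adj_def gen_edge_def by auto

lemma adj_UB: "adj K N (U b d) (B a c) \<longleftrightarrow> a\<in>{1..K} \<and> b\<in>{1..K} \<and> c\<in>{1..N} \<and> d\<in>{1..N} \<and> (a = b \<or> c = d)"
  unfolding adj_def gen_edge_def by auto

lemma adj_UU: "adj K N (U a c) (U b d) \<longleftrightarrow> a\<in>{1..K} \<and> b\<in>{1..K} \<and> c\<in>{1..N} \<and> d\<in>{1..N} \<and> ((a = b \<and> c \<noteq> d) \<or> (c = d \<and> a \<noteq> b))"
  unfolding adj_def gen_edge_def by auto

theorem lemma5:
  fixes K N i :: nat
  assumes "i \<in> {1..K}"
  shows "perfect (adj K N) ((\<Union>j\<in>{1..K}. Bset N j) \<union> Uset N i)"
proof -
  define V where "V = (\<Union>j\<in>{1..K}. Bset N j) \<union> Uset N i"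
  have memB: "B a c \<in> V \<longleftrightarrow> a\<in>{1..K} \<and> c\<in>{1..N}" for a c
    unfolding V_def Bset_def Uset_def by auto
  have memU: "U a c \<in> V \<longleftrightarrow> a = i \<and> c\<in>{1..N}" for a c
    unfolding V_def Bset_def Uset_def by auto
  have fin: "finite V"
  proof -
    have "Bset N j = B j ` {1..N}" for j unfolding Bset_def by auto
    moreover have "Uset N i = U i ` {1..N}" unfolding Uset_def by auto
    ultimately show ?thesis unfolding V_def by simp
  qed
  have "perfect (adj K N) V"
  proof (rule perfect_simplicial[OF _ _ fin])
    show "adj K N x y \<Longrightarrow> adj K N y x" for x y unfolding adj_def by blast
    show "\<not> adj K N x x" for x by (cases x) (auto simp: adj_BB adj_UU)
  next
    fix T assume TV: "T \<subseteq> V" and ne: "T \<noteq> {}"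
    let ?P = "\<lambda>v. \<forall>x\<in>T. \<forall>y\<in>T. x \<noteq> v \<and> y \<noteq> v \<and> x \<noteq> y \<and> adj K N v x \<and> adj K N v y \<longrightarrow> adj K N x y"
    show "\<exists>v\<in>T. ?P v"
    proof (cases "\<exists>j c. B j c \<in> T \<and> j \<noteq> i")
      case True
      then obtain j c where jc: "B j c \<in> T" "j \<noteq> i" by blast
      have "?P (B j c)"
      proof (intro ballI impI)
        fix x y assume xy: "x \<in> T" "y \<in> T" "x \<noteq> B j c \<and> y \<noteq> B j c \<and> x \<noteq> y \<and> adj K N (B j c) x \<and> adj K N (B j c) y"
        have xV: "x \<in> V" "y \<in> V" using xy TV by auto
        show "adj K N x y"
          using xy xV jc
          by (cases x; cases y) (auto simp: adj_BB adj_BU adj_UB adj_UU memB memU)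
      qed
      then show ?thesis using jc by blast
    next
      case False
      show ?thesis
      proof (cases "\<exists>c. B i c \<in> T")
        case True
        then obtain c where c: "B i c \<in> T" by blast
        have "?P (B i c)"
        proof (intro ballI impI)
          fix x y assume xy: "x \<in> T" "y \<in> T" "x \<noteq> B i c \<and> y \<noteq> B i c \<and> x \<noteq> y \<and> adj K N (B i c) x \<and> adj K N (B i c) y"
          have xV: "x \<in> V" "y \<in> V" using xy TV by auto
          show "adj K N x y"
            using xy xV False
            by (cases x; cases y) (auto simp: adj_BB adj_BU adj_UB adj_UU memB memU)
        qed
        then show ?thesis using c by blast
      next
        case False2: False
        obtain v where v: "v \<in> T" using ne by blast
        have "?P v"
        proof (intro ballI impI)
          fix x y assume xy: "x \<in> T" "y \<in> T" "x \<noteq> v \<and> y \<noteq> v \<and> x \<noteq> y \<and> adj K N v x \<and> adj K N v y"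
          have xV: "x \<in> V" "y \<in> V" using xy TV by auto
          have "\<not> (\<exists>j c. B j c \<in> T)" using False False2 by blast
          then show "adj K N x y"
            using xy xV assms
            by (cases x; cases y) (auto simp: adj_UU memU)
        qed
        then show ?thesis using v by blast
      qed
    qed
  qed
  then show ?thesis unfolding V_def .
qed

end
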